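(* rATL is strictly more expressive than ATL, in the following sense: (i) for every ATL formula $\varphi$ there is an rATL formula $\varphi^\star$ such that for every concurrent game structure $\mathcal{S}$ and every state $s$, $V(s,\varphi^\star)=1111$ iff $\mathcal{S},s\models\varphi$; and (ii) there exist an rATL formula $\psi$ and a truth value $u\in\mathbb{B}_4$ (e.g. $\psi=\langle\!\langle A\rangle\!\rangle\dot\Box p$ and $u=0011$) such that there is no ATL formula $\chi$ with $\mathcal{S},s\models\chi\iff V(s,\psi)\succeq u$ for all concurrent game structures $\mathcal{S}$ and states $s$.
   Context: Fix a finite set $\mathrm{AP}$ of atomic propositions. A concurrent game structure (CGS) is a tuple $\mathcal{S}=(St,Ag,Ac,\delta,\ell)$ where $St$ is a finite set of states, $Ag$ a finite set of agents, $Ac$ a finite set of actions, $\ell:St\to 2^{\mathrm{AP}}$ a labeling, and $\delta:St\times AV\to St$ a transition function, where $AV$ is the set of action vectors for $Ag$ (an action vector for $A\subseteq Ag$ is a map $A\to Ac$). A state $s'$ is a successor of $s$ if $s'=\delta(s,v)$ for some $v\in AV$. A path is an infinite sequence $\pi=s_0s_1s_2\cdots$ of states with $s_{n+1}$ a successor of $s_n$ for all $n$; write $\pi[n]=s_n$. A strategy for an agent is a function $f:St^+\to Ac$. For $A\subseteq Ag$ and a set $F_A=\{f_a\mid a\in A\}$ of strategies, one for each agent in $A$, $out(s,F_A)$ is the set of paths $s_0s_1\cdots$ with $s_0=s$ such that for every $n\ge 0$ there is $v\in AV$ with $v(a)=f_a(s_0\cdots s_n)$ for all $a\in A$ and $s_{n+1}=\delta(s_n,v)$.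 $\mathbb{B}_4=\{1111,0111,0011,0001,0000\}$ is totally ordered by $1111\succ0111\succ0011\succ0001\succ0000$; for $b=b_1b_2b_3b_4\in\mathbb{B}_4$ and $k\in\{1,2,3,4\}$, $b[k]=b_k$; max and min on $\mathbb{B}_4$ refer to this order, and on bits to $0<1$. rATL formulas: state formulas $\varphi ::= p \mid \neg\varphi\mid\varphi\vee\varphi\mid\varphi\wedge\varphi\mid\varphi\to\varphi\mid\langle\!\langle A\rangle\!\rangle\Phi\mid[\![A]\!]\Phi$ and path formulas $\Phi::=\dot{\bigcirc}\varphi\mid\dot\Diamond\varphi\mid\dot\Box\varphi$, with $p\in\mathrm{AP}$ and $A$ a set of agents; an rATL formula is a state formula. On a CGS the valuation $V$ maps (state, state formula) and (path, path formula) pairs to $\mathbb{B}_4$: $V(s,p)=1111$ if $p\in\ell(s)$ and $0000$ otherwise; $V(s,\varphi_1\vee\varphi_2)=\max(V(s,\varphi_1),V(s,\varphi_2))$; $V(s,\varphi_1\wedge\varphi_2)=\min(V(s,\varphi_1),V(s,\varphi_2))$; $V(s,\neg\varphi)=0000$ if $V(s,\varphi)=1111$ and $1111$ otherwise; $V(s,\varphi_1\to\varphi_2)=1111$ if $V(s,\varphi_1)\preceq V(s,\varphi_2)$ and $V(s,\varphi_2)$ otherwise; $V(s,\langle\!\langle A\rangle\!\rangle\Phi)$ is the maximal $b\in\mathbb{B}_4$ such that there is a set $F_A$ of strategies (one per agent in $A$) with $V(\pi,\Phi)\succeq b$ for all $\pi\in out(s,F_A)$; $V(s,[\![A]\!]\Phi)$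 is the maximal $b\in\mathbb{B}_4$ such that for every such $F_A$ there is $\pi\in out(s,F_A)$ with $V(\pi,\Phi)\succeq b$. For paths: $V(\pi,\dot\bigcirc\varphi)[k]=V(\pi[1],\varphi)[k]$; $V(\pi,\dot\Diamond\varphi)[k]=\max_{i\ge0}V(\pi[i],\varphi)[k]$; $V(\pi,\dot\Box\varphi)=b_1b_2b_3b_4$ with $b_1=\min_{i\ge0}V(\pi[i],\varphi)[1]$, $b_2=\max_{i\ge0}\min_{j\ge i}V(\pi[j],\varphi)[2]$, $b_3=\min_{i\ge0}\max_{j\ge i}V(\pi[j],\varphi)[3]$, $b_4=\max_{i\ge0}V(\pi[i],\varphi)[4]$. ATL formulas: state formulas $\varphi::=p\mid\neg\varphi\mid\varphi\vee\varphi\mid\varphi\wedge\varphi\mid\varphi\to\varphi\mid\langle\!\langle A\rangle\!\rangle\Phi\mid[\![A]\!]\Phi$ and path formulas $\Phi::=\bigcirc\varphi\mid\Diamond\varphi\mid\Box\varphi$, with the standard Boolean semantics: $\mathcal{S},s\models p$ iff $p\in\ell(s)$; Boolean connectives as usual; $\mathcal{S},s\models\langle\!\langle A\rangle\!\rangle\Phi$ iff there is a set $F_A$ of strategies (one per agent in $A$) with $\mathcal{S},\pi\models\Phi$ for all $\pi\in out(s,F_A)$; $\mathcal{S},s\models[\![A]\!]\Phi$ iff for every such $F_A$ some $\pi\in out(s,F_A)$ satisfies $\mathcal{S},\pi\models\Phi$; $\mathcal{S},\pi\models\bigcirc\varphi$ iff $\mathcal{S},\pi[1]\models\varphi$; $\mathcal{S},\pi\models\Diamond\varphi$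 iff $\mathcal{S},\pi[i]\models\varphi$ for some $i\ge0$; $\mathcal{S},\pi\models\Box\varphi$ iff $\mathcal{S},\pi[i]\models\varphi$ for all $i\ge0$. *)

theory Defs
  imports Main "HOL-Library.FuncSet"
begin

datatype b4 = B0000 | B0001 | B0011 | B0111 | B1111

fun b4_rank :: "b4 \<Rightarrow> nat" where
  "b4_rank B0000 = 0" | "b4_rank B0001 = 1" | "b4_rank B0011 = 2"
| "b4_rank B0111 = 3" | "b4_rank B1111 = 4"

lemma b4_rank_inj: "b4_rank x = b4_rank y \<Longrightarrow> x = y"
  by (cases x; cases y; simp)

instantiation b4 :: linorder
begin
definition less_eq_b4 :: "b4 \<Rightarrow> b4 \<Rightarrow> bool" where
  "less_eq_b4 x y \<longleftrightarrow> b4_rank x \<le> b4_rank y"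
definition less_b4 :: "b4 \<Rightarrow> b4 \<Rightarrow> bool" where
  "less_b4 x y \<longleftrightarrow> b4_rank x < b4_rank y"
instance
  by standard (auto simp: less_eq_b4_def less_b4_def intro: b4_rank_inj)
end

text \<open>The k-th bit (k in 1..4) of a truth value, b[k].\<close>
definition bit4 :: "b4 \<Rightarrow> nat \<Rightarrow> bool" where
  "bit4 b k \<longleftrightarrow> 5 - k \<le> b4_rank b"

text \<open>Assemble a truth value b1 b2 b3 b4 from its bits (used for monotone
  bit vectors b1 <= b2 <= b3 <= b4, which are exactly the elements of B4).\<close>
definition from_bits :: "(nat \<Rightarrow> bool) \<Rightarrow> b4" where
  "from_bits f = (if f 1 then B1111 else if f 2 then B0111 else if f 3 then B0011
                  else if f 4 then B0001 else B0000)"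

text \<open>States and actions are natural numbers (every finite CGS is isomorphic
  to one of this form); agents have an arbitrary type; 'ap is the finite set AP.\<close>
record ('ag, 'ap) cgs =
  St :: "nat set"
  Ag :: "'ag set"
  Ac :: "nat set"
  delta :: "nat \<Rightarrow> ('ag \<Rightarrow> nat) \<Rightarrow> nat"
  lab :: "nat \<Rightarrow> 'ap set"

definition AV :: "('ag, 'ap) cgs \<Rightarrow> ('ag \<Rightarrow> nat) set" where
  "AV S = PiE (Ag S) (\<lambda>_. Ac S)"

definition is_cgs :: "('ag, 'ap) cgs \<Rightarrow> bool" where
  "is_cgs S \<longleftrightarrow> finite (St S) \<and> St S \<noteq> {} \<and> finite (Ag S) \<and> finite (Ac S) \<and> Ac S \<noteq> {}
     \<and> (\<forall>s\<in>St S. \<forall>v\<in>AV S. delta S s v \<in> St S)"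

text \<open>A strategy profile for coalition A: F a is the strategy of agent a,
  a map from histories (nonempty state sequences) to actions.\<close>
definition strats :: "('ag, 'ap) cgs \<Rightarrow> 'ag set \<Rightarrow> ('ag \<Rightarrow> nat list \<Rightarrow> nat) \<Rightarrow> bool" where
  "strats S A F \<longleftrightarrow> (\<forall>a\<in>A. \<forall>h. F a h \<in> Ac S)"

definition out :: "('ag, 'ap) cgs \<Rightarrow> nat \<Rightarrow> 'ag set \<Rightarrow> ('ag \<Rightarrow> nat list \<Rightarrow> nat)
                    \<Rightarrow> (nat \<Rightarrow> nat) set" where
  "out S s A F = {\<pi>. \<pi> 0 = s \<and>
     (\<forall>n. \<exists>v\<in>AV S. (\<forall>a\<in>A \<inter> Ag S. v a = F a (map \<pi> [0..<Suc n]))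
                  \<and> \<pi> (Suc n) = delta S (\<pi> n) v)}"

datatype ('ag, 'ap) rsf =
    RProp 'ap | RNeg "('ag, 'ap) rsf" | ROr "('ag, 'ap) rsf" "('ag, 'ap) rsf"
  | RAnd "('ag, 'ap) rsf" "('ag, 'ap) rsf" | RImp "('ag, 'ap) rsf" "('ag, 'ap) rsf"
  | RDia "'ag set" "('ag, 'ap) rpf" | RBox "'ag set" "('ag, 'ap) rpf"
and ('ag, 'ap) rpf = RNext "('ag, 'ap) rsf" | REv "('ag, 'ap) rsf" | RAlw "('ag, 'ap) rsf"

primrec V :: "('ag, 'ap) cgs \<Rightarrow> nat \<Rightarrow> ('ag, 'ap) rsf \<Rightarrow> b4"
  and VP :: "('ag, 'ap) cgs \<Rightarrow> (nat \<Rightarrow> nat) \<Rightarrow> ('ag, 'ap) rpf \<Rightarrow> b4" where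
  "V S s (RProp p) = (if p \<in> lab S s then B1111 else B0000)"
| "V S s (RNeg \<phi>) = (if V S s \<phi> = B1111 then B0000 else B1111)"
| "V S s (ROr \<phi> \<psi>) = max (V S s \<phi>) (V S s \<psi>)"
| "V S s (RAnd \<phi> \<psi>) = min (V S s \<phi>) (V S s \<psi>)"
| "V S s (RImp \<phi> \<psi>) = (if V S s \<phi> \<le> V S s \<psi> then B1111 else V S s \<psi>)"
| "V S s (RDia A \<Phi>) =
     (GREATEST b. \<exists>F. strats S A F \<and> (\<forall>\<pi>\<in>out S s A F. b \<le> VP S \<pi> \<Phi>))"
| "V S s (RBox A \<Phi>) =
     (GREATEST b. \<forall>F. strats S A F \<longrightarrow> (\<exists>\<pi>\<in>out S s A F. b \<le> VP S \<pi> \<Phi>))"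
| "VP S \<pi> (RNext \<phi>) = from_bits (\<lambda>k. bit4 (V S (\<pi> 1) \<phi>) k)"
| "VP S \<pi> (REv \<phi>) = from_bits (\<lambda>k. \<exists>i. bit4 (V S (\<pi> i) \<phi>) k)"
| "VP S \<pi> (RAlw \<phi>) = from_bits (\<lambda>k.
      if k = 1 then (\<forall>i. bit4 (V S (\<pi> i) \<phi>) 1)
      else if k = 2 then (\<exists>i. \<forall>j\<ge>i. bit4 (V S (\<pi> j) \<phi>) 2)
      else if k = 3 then (\<forall>i. \<exists>j\<ge>i. bit4 (V S (\<pi> j) \<phi>) 3)
      else (\<exists>i. bit4 (V S (\<pi> i) \<phi>) 4))"

datatype ('ag, 'ap) asf =
    AProp 'ap | ANeg "('ag, 'ap) asf" | AOr "('ag, 'ap) asf" "('ag, 'ap) asf"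
  | AAnd "('ag, 'ap) asf" "('ag, 'ap) asf" | AImp "('ag, 'ap) asf" "('ag, 'ap) asf"
  | ADia "'ag set" "('ag, 'ap) apf" | ABox "'ag set" "('ag, 'ap) apf"
and ('ag, 'ap) apf = ANext "('ag, 'ap) asf" | AEv "('ag, 'ap) asf" | AAlw "('ag, 'ap) asf"

primrec sat :: "('ag, 'ap) cgs \<Rightarrow> nat \<Rightarrow> ('ag, 'ap) asf \<Rightarrow> bool"
  and satp :: "('ag, 'ap) cgs \<Rightarrow> (nat \<Rightarrow> nat) \<Rightarrow> ('ag, 'ap) apf \<Rightarrow> bool" where
  "sat S s (AProp p) \<longleftrightarrow> p \<in> lab S s"
| "sat S s (ANeg \<phi>) \<longleftrightarrow> \<not> sat S s \<phi>"
| "sat S s (AOr \<phi> \<psi>) \<longleftrightarrow> sat S s \<phi> \<or> sat S s \<psi>"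
| "sat S s (AAnd \<phi> \<psi>) \<longleftrightarrow> sat S s \<phi> \<and> sat S s \<psi>"
| "sat S s (AImp \<phi> \<psi>) \<longleftrightarrow> (sat S s \<phi> \<longrightarrow> sat S s \<psi>)"
| "sat S s (ADia A \<Phi>) \<longleftrightarrow> (\<exists>F. strats S A F \<and> (\<forall>\<pi>\<in>out S s A F. satp S \<pi> \<Phi>))"
| "sat S s (ABox A \<Phi>) \<longleftrightarrow> (\<forall>F. strats S A F \<longrightarrow> (\<exists>\<pi>\<in>out S s A F. satp S \<pi> \<Phi>))"
| "satp S \<pi> (ANext \<phi>) \<longleftrightarrow> sat S (\<pi> 1) \<phi>"
| "satp S \<pi> (AEv \<phi>) \<longleftrightarrow> (\<exists>i. sat S (\<pi> i) \<phi>)"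
| "satp S \<pi> (AAlw \<phi>) \<longleftrightarrow> (\<forall>i. sat S (\<pi> i) \<phi>)"

end

theory Submission
  imports Defs
begin

lemma b4_top: "B1111 \<le> x \<longleftrightarrow> x = B1111"
  by (cases x) (auto simp: less_eq_b4_def)

lemma b4_bot: "B0000 \<le> x"
  by (cases x) (auto simp: less_eq_b4_def)

lemma max_top: "max x y = B1111 \<longleftrightarrow> x = B1111 \<or> y = B1111"
  by (cases x; cases y) (auto simp: max_def less_eq_b4_def)

lemma min_top: "min x y = B1111 \<longleftrightarrow> x = B1111 \<and> y = B1111"
  by (cases x; cases y) (auto simp: min_def less_eq_b4_def)

lemma bit1_top: "bit4 b 1 \<longleftrightarrow> b = B1111"
  by (cases b) (auto simp: bit4_def)

lemma bit1_top': "bit4 b (Suc 0) \<longleftrightarrow> b = B1111"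
  by (cases b) (auto simp: bit4_def)

lemma from_bits_top: "from_bits f = B1111 \<longleftrightarrow> f 1"
  by (auto simp: from_bits_def)

lemma ex_greatest_b4:
  fixes P :: "b4 \<Rightarrow> bool"
  assumes "P b"
  shows "\<exists>m. P m \<and> (\<forall>y. P y \<longrightarrow> y \<le> m)"
proof -
  let ?m = "if P B1111 then B1111 else if P B0111 then B0111 else if P B0011 then B0011
            else if P B0001 then B0001 else B0000"
  have "P ?m" using assms by (cases b) auto
  moreover have "\<forall>y. P y \<longrightarrow> y \<le> ?m"
  proof (intro allI impI)
    fix y assume "P y" then show "y \<le> ?m" by (cases y) (auto simp: less_eq_b4_def)
  qed
  ultimately show ?thesis by blast
qed

lemma Greatest_b4:
  fixes P :: "b4 \<Rightarrow> bool"
  assumes "P b"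
  shows "P (Greatest P)" "\<And>y. P y \<Longrightarrow> y \<le> Greatest P"
proof -
  obtain m where m: "P m" "\<forall>y. P y \<longrightarrow> y \<le> m" using ex_greatest_b4[of P b, OF assms] by blast
  then have "Greatest P = m" by (intro Greatest_equality) auto
  then show "P (Greatest P)" "\<And>y. P y \<Longrightarrow> y \<le> Greatest P" using m by auto
qed

lemma Greatest_top:
  fixes P :: "b4 \<Rightarrow> bool"
  assumes "P b"
  shows "Greatest P = B1111 \<longleftrightarrow> P B1111"
  using Greatest_b4[of P b, OF assms] b4_top by metis

lemma strats_ex: "is_cgs S \<Longrightarrow> \<exists>F. strats S A F"
proof -
  assume "is_cgs S"
  then obtain c where "c \<in> Ac S" unfolding is_cgs_def by blast
  then show ?thesis unfolding strats_def by (intro exI[of _ "\<lambda>_ _. c"]) simp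
qed

lemma V_RDia_top:
  assumes "is_cgs S"
  shows "V S s (RDia A \<Phi>) = B1111 \<longleftrightarrow>
    (\<exists>F. strats S A F \<and> (\<forall>\<pi>\<in>out S s A F. VP S \<pi> \<Phi> = B1111))"
proof -
  define P where "P = (\<lambda>b. \<exists>F. strats S A F \<and> (\<forall>\<pi>\<in>out S s A F. b \<le> VP S \<pi> \<Phi>))"
  obtain F where F: "strats S A F" using strats_ex[OF assms] by blast
  have "P B0000"
    unfolding P_def using F b4_bot by blast
  then have "Greatest P = B1111 \<longleftrightarrow> P B1111" by (rule Greatest_top)
  moreover have "V S s (RDia A \<Phi>) = Greatest P" unfolding P_def by (simp only: V.simps)
  moreover have "P B1111 \<longleftrightarrow> (\<exists>F. strats S A F \<and> (\<forall>\<pi>\<in>out S s A F. VP S \<pi> \<Phi> = B1111))"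
    unfolding P_def by (simp only: b4_top)
  ultimately show ?thesis by simp
qed

fun tr :: "('ag,'ap) asf \<Rightarrow> ('ag,'ap) rsf"
  and trp :: "('ag,'ap) apf \<Rightarrow> ('ag,'ap) rpf \<times> ('ag,'ap) rpf" where
  "tr (AProp p) = RProp p"
| "tr (ANeg \<phi>) = RNeg (tr \<phi>)"
| "tr (AOr a b) = ROr (tr a) (tr b)"
| "tr (AAnd a b) = RAnd (tr a) (tr b)"
| "tr (AImp a b) = ROr (RNeg (tr a)) (tr b)"
| "tr (ADia A \<Phi>) = RDia A (fst (trp \<Phi>))"
| "tr (ABox A \<Phi>) = RNeg (RDia A (snd (trp \<Phi>)))"
| "trp (ANext \<phi>) = (RNext (tr \<phi>), RNext (RNeg (tr \<phi>)))"
| "trp (AEv \<phi>) = (REv (tr \<phi>), RAlw (RNeg (tr \<phi>)))"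
| "trp (AAlw \<phi>) = (RAlw (tr \<phi>), REv (RNeg (tr \<phi>)))"

lemma tr_correct:
  assumes "is_cgs S"
  shows "(\<forall>s. V S s (tr \<phi>) = B1111 \<longleftrightarrow> sat S s \<phi>) \<and>
         (\<forall>\<pi>. (VP S \<pi> (fst (trp \<Phi>)) = B1111 \<longleftrightarrow> satp S \<pi> \<Phi>) \<and>
              (VP S \<pi> (snd (trp \<Phi>)) = B1111 \<longleftrightarrow> \<not> satp S \<pi> \<Phi>))"
proof (induct rule: asf_apf.induct)
  case (AProp x) then show ?case by simp
next
  case (ANeg x) then show ?case by simp
next
  case (AOr x1 x2) then show ?case by (simp add: max_top)
next
  case (AAnd x1 x2) then show ?case by (simp add: min_top)
next
  case (AImp x1 x2) then show ?case by (simp add: max_top)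
next
  case (ADia A \<Phi>)
  show ?case
  proof
    fix s
    have "V S s (RDia A (fst (trp \<Phi>))) = B1111 \<longleftrightarrow>
      (\<exists>F. strats S A F \<and> (\<forall>\<pi>\<in>out S s A F. VP S \<pi> (fst (trp \<Phi>)) = B1111))"
      by (rule V_RDia_top[OF assms])
    also have "\<dots> \<longleftrightarrow> (\<exists>F. strats S A F \<and> (\<forall>\<pi>\<in>out S s A F. satp S \<pi> \<Phi>))"
      using ADia by (simp only:)
    also have "\<dots> \<longleftrightarrow> sat S s (ADia A \<Phi>)" by (simp only: sat.simps)
    finally show "V S s (tr (ADia A \<Phi>)) = B1111 \<longleftrightarrow> sat S s (ADia A \<Phi>)"
      by (simp only: tr.simps)
  qed
next
  case (ABox A \<Phi>)
  show ?case
  proof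
    fix s
    have "V S s (RDia A (snd (trp \<Phi>))) = B1111 \<longleftrightarrow>
      (\<exists>F. strats S A F \<and> (\<forall>\<pi>\<in>out S s A F. VP S \<pi> (snd (trp \<Phi>)) = B1111))"
      by (rule V_RDia_top[OF assms])
    also have "\<dots> \<longleftrightarrow> (\<exists>F. strats S A F \<and> (\<forall>\<pi>\<in>out S s A F. \<not> satp S \<pi> \<Phi>))"
      using ABox by (simp only:)
    finally have "V S s (RDia A (snd (trp \<Phi>))) = B1111 \<longleftrightarrow> \<not> sat S s (ABox A \<Phi>)"
      by (simp only: sat.simps) blast
    moreover have "V S s (tr (ABox A \<Phi>)) = B1111 \<longleftrightarrow> V S s (RDia A (snd (trp \<Phi>))) \<noteq> B1111"
      by (simp only: tr.simps V.simps(2)) simp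
    ultimately show "V S s (tr (ABox A \<Phi>)) = B1111 \<longleftrightarrow> sat S s (ABox A \<Phi>)"
      by blast
  qed
next
  case (ANext x) then show ?case by (simp add: from_bits_top bit1_top bit1_top')
next
  case (AEv x) then show ?case by (simp add: from_bits_top bit1_top bit1_top')
next
  case (AAlw x) then show ?case by (simp add: from_bits_top bit1_top bit1_top')
qed

theorem part1:
  "\<forall>\<phi> :: ('ag, 'ap::finite) asf. \<exists>\<phi>' :: ('ag, 'ap) rsf.
            \<forall>(S :: ('ag, 'ap) cgs) s. is_cgs S \<longrightarrow> s \<in> St S \<longrightarrow>
              (V S s \<phi>' = B1111 \<longleftrightarrow> sat S s \<phi>)"
proof
  fix \<phi> :: "('ag, 'ap) asf"
  show "\<exists>\<phi>' :: ('ag, 'ap) rsf.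
            \<forall>(S :: ('ag, 'ap) cgs) s. is_cgs S \<longrightarrow> s \<in> St S \<longrightarrow>
              (V S s \<phi>' = B1111 \<longleftrightarrow> sat S s \<phi>)"
  proof (intro exI allI impI)
    fix S :: "('ag, 'ap) cgs" and s
    assume "is_cgs S"
    from tr_correct[OF this, of \<phi>] show "V S s (tr \<phi>) = B1111 \<longleftrightarrow> sat S s \<phi>" by simp
  qed
qed



definition Rr :: "nat \<Rightarrow> nat \<Rightarrow> nat \<Rightarrow> bool" where
  "Rr n s t \<longleftrightarrow> (even s \<and> t = Suc s) \<or>
     (odd s \<and> (t = s \<or> (s = 1 \<and> (t = 0 \<or> t = 2*n)) \<or> (5 \<le> s \<and> t = s - 3)))"

definition nxt :: "nat \<Rightarrow> nat \<Rightarrow> nat \<Rightarrow> nat" where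
  "nxt n s k = (if Rr n s k then k else if even s then Suc s else s)"

definition M :: "nat \<Rightarrow> ('ag, 'ap) cgs" where
  "M n = \<lparr>St = {..2*n+1}, Ag = {undefined}, Ac = {..2*n+1},
          delta = (\<lambda>s v. nxt n s (v undefined)),
          lab = (\<lambda>s. if even s then {undefined} else {})\<rparr>"

definition Pth :: "nat \<Rightarrow> nat \<Rightarrow> (nat \<Rightarrow> nat) set" where
  "Pth n s = {\<pi>. \<pi> 0 = s \<and> (\<forall>k. Rr n (\<pi> k) (\<pi> (Suc k)))}"

lemma Rr_even: "even s \<Longrightarrow> Rr n s t \<longleftrightarrow> t = Suc s"
  by (auto simp: Rr_def)

lemma Rr_odd: "odd s \<Longrightarrow> Rr n s t \<longleftrightarrow> (t = s \<or> (s = 1 \<and> (t = 0 \<or> t = 2*n)) \<or> (5 \<le> s \<and> t = s - 3))"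
  by (auto simp: Rr_def)

lemma Rr_nxt: "Rr n s (nxt n s k)"
  by (auto simp: nxt_def Rr_def)

lemma Rr_bound: "Rr n s t \<Longrightarrow> s \<le> 2*n+1 \<Longrightarrow> t \<le> 2*n+1"
  unfolding Rr_def by (auto elim!: evenE)

lemma Rr_bound': "Rr n s t \<Longrightarrow> s \<le> Suc (2*n) \<Longrightarrow> t \<le> Suc (2*n)"
  using Rr_bound by simp

lemma nxt_bound: "s \<le> 2*n+1 \<Longrightarrow> nxt n s k \<le> 2*n+1"
  using Rr_bound Rr_nxt by blast

lemma nxt_bound': "s \<le> Suc (2*n) \<Longrightarrow> nxt n s k \<le> Suc (2*n)"
  using nxt_bound by simp

lemma M_simps [simp]:
  "St (M n) = {..2*n+1}" "Ag (M n) = {undefined}" "Ac (M n) = {..2*n+1}"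
  "delta (M n) = (\<lambda>s v. nxt n s (v undefined))"
  "lab (M n) = (\<lambda>s. if even s then {undefined} else {})"
  by (simp_all add: M_def)

lemma is_cgs_M: "is_cgs (M n)"
  unfolding is_cgs_def AV_def by (auto simp: nxt_bound')

lemma path_bound: "\<pi> \<in> Pth n s \<Longrightarrow> s \<le> 2*n+1 \<Longrightarrow> \<pi> k \<le> 2*n+1"
  unfolding Pth_def by (induct k) (auto intro: Rr_bound')

lemma out_sub: "out (M n :: ('ag,'ap) cgs) s A F \<subseteq> Pth n s"
proof
  fix \<pi> assume "\<pi> \<in> out (M n :: ('ag,'ap) cgs) s A F"
  then have "\<pi> 0 = s" and "\<forall>k. \<exists>v::'ag\<Rightarrow>nat. \<pi> (Suc k) = nxt n (\<pi> k) (v undefined)"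
    unfolding out_def by auto
  then show "\<pi> \<in> Pth n s" unfolding Pth_def
  proof (intro CollectI conjI allI)
    fix k assume "\<forall>k. \<exists>v::'ag\<Rightarrow>nat. \<pi> (Suc k) = nxt n (\<pi> k) (v undefined)"
    then obtain v :: "'ag\<Rightarrow>nat" where "\<pi> (Suc k) = nxt n (\<pi> k) (v undefined)" by blast
    then show "Rr n (\<pi> k) (\<pi> (Suc k))" using Rr_nxt by simp
  qed
qed

lemma nxt_Rr: "Rr n s t \<Longrightarrow> nxt n s t = t"
  by (simp add: nxt_def)

lemma out_eq: assumes "s \<le> 2*n+1" "(undefined::'ag) \<notin> A" shows "out (M n :: ('ag,'ap) cgs) s A F = Pth n s"
proof
  show "out (M n :: ('ag,'ap) cgs) s A F \<subseteq> Pth n s" by (rule out_sub)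
  show "Pth n s \<subseteq> out (M n :: ('ag,'ap) cgs) s A F"
  proof
    fix \<pi> assume p: "\<pi> \<in> Pth n s"
    have "\<exists>v\<in>AV (M n :: ('ag,'ap) cgs). (\<forall>a\<in>A \<inter> Ag (M n :: ('ag,'ap) cgs). v a = F a (map \<pi> [0..<Suc k]))
                  \<and> \<pi> (Suc k) = delta (M n :: ('ag,'ap) cgs) (\<pi> k) v" for k
    proof (intro bexI conjI)
      let ?v = "\<lambda>a::'ag. if a = undefined then \<pi> (Suc k) else undefined"
      show "?v \<in> AV (M n :: ('ag,'ap) cgs)" unfolding AV_def using path_bound[OF p assms(1)] by (auto simp: PiE_def extensional_def split: if_splits)
      show "\<forall>a\<in>A \<inter> Ag (M n :: ('ag,'ap) cgs). ?v a = F a (map \<pi> [0..<Suc k])" using assms(2) by auto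
      show "\<pi> (Suc k) = delta (M n :: ('ag,'ap) cgs) (\<pi> k) ?v" using p by (simp add: Pth_def nxt_Rr)
    qed
    then show "\<pi> \<in> out (M n :: ('ag,'ap) cgs) s A F" using p unfolding out_def Pth_def by auto
  qed
qed

lemma out_nonempty:
  assumes "is_cgs S" "strats S A F"
  shows "\<exists>\<pi>. \<pi> \<in> out S s A F"
proof -
  obtain c where c: "c \<in> Ac S" using assms(1) unfolding is_cgs_def by blast
  define vec where "vec h = (\<lambda>a. if a \<in> Ag S then (if a \<in> A then F a h else c) else undefined)" for h
  have vecAV: "vec h \<in> AV S" for h
    using c assms(2) unfolding AV_def vec_def strats_def by auto
  define hist where "hist = rec_nat [s] (\<lambda>n h. h @ [delta S (last h) (vec h)])"
  have h0: "hist 0 = [s]" and hS: "hist (Suc n) = hist n @ [delta S (last (hist n)) (vec (hist n))]" for n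
    by (simp_all add: hist_def)
  define \<pi> where "\<pi> n = last (hist n)" for n
  have hm: "hist n = map \<pi> [0..<Suc n]" for n
  proof (induct n)
    case 0 then show ?case by (simp add: h0 \<pi>_def)
  next
    case (Suc n)
    have "\<pi> (Suc n) = delta S (last (hist n)) (vec (hist n))" by (simp add: \<pi>_def hS)
    then show ?case using Suc by (simp add: hS)
  qed
  have "\<pi> \<in> out S s A F"
    unfolding out_def
  proof (intro CollectI conjI allI)
    show "\<pi> 0 = s" by (simp add: \<pi>_def h0)
    fix n
    show "\<exists>v\<in>AV S. (\<forall>a\<in>A \<inter> Ag S. v a = F a (map \<pi> [0..<Suc n])) \<and> \<pi> (Suc n) = delta S (\<pi> n) v"
    proof (intro bexI conjI)
      show "vec (hist n) \<in> AV S" by (rule vecAV)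
      show "\<forall>a\<in>A \<inter> Ag S. vec (hist n) a = F a (map \<pi> [0..<Suc n])"
        by (simp add: vec_def hm)
      show "\<pi> (Suc n) = delta S (\<pi> n) (vec (hist n))" by (simp add: \<pi>_def hS)
    qed
  qed
  then show ?thesis by blast
qed

lemma out_single:
  assumes p: "\<pi> \<in> Pth n s" and s: "s \<le> 2*n+1"
  shows "strats (M n :: ('ag,'ap) cgs) A (\<lambda>a h. \<pi> (length h))"
    and "(undefined::'ag) \<in> A \<Longrightarrow> \<pi>' \<in> out (M n :: ('ag,'ap) cgs) s A (\<lambda>a h. \<pi> (length h)) \<Longrightarrow> \<pi>' = \<pi>"
proof -
  show "strats (M n :: ('ag,'ap) cgs) A (\<lambda>a h. \<pi> (length h))"
    unfolding strats_def using path_bound[OF p s] by auto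
  assume g: "undefined \<in> A" and o: "\<pi>' \<in> out (M n :: ('ag,'ap) cgs) s A (\<lambda>a h. \<pi> (length h))"
  have "\<pi>' k = \<pi> k" for k
  proof (induct k)
    case 0 then show ?case using o p by (simp add: out_def Pth_def)
  next
    case (Suc k)
    from o have "\<forall>na. \<exists>v\<in>AV (M n :: ('ag,'ap) cgs). (\<forall>a\<in>A \<inter> Ag (M n :: ('ag,'ap) cgs). v a = \<pi> (length (map \<pi>' [0..<Suc na])))
       \<and> \<pi>' (Suc na) = delta (M n :: ('ag,'ap) cgs) (\<pi>' na) v"
      unfolding out_def by blast
    then obtain v where v: "v \<in> AV (M n :: ('ag,'ap) cgs)"
      "\<forall>a\<in>A \<inter> Ag (M n :: ('ag,'ap) cgs). v a = \<pi> (length (map \<pi>' [0..<Suc k]))"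
      "\<pi>' (Suc k) = delta (M n :: ('ag,'ap) cgs) (\<pi>' k) v"
      by blast
    have "v (undefined::'ag) = \<pi> (Suc k)" using v(2) g by simp
    moreover have "Rr n (\<pi> k) (\<pi> (Suc k))" using p by (simp add: Pth_def)
    ultimately show ?case using v(3) Suc by (simp add: nxt_Rr)
  qed
  then show "\<pi>' = \<pi>" by blast
qed

lemma strats0: "strats (M n :: ('ag,'ap) cgs) A (\<lambda>a h. 0)"
  by (simp add: strats_def)

lemma sat_dia:
  assumes s: "s \<le> 2*n+1"
  shows "sat (M n :: ('ag,'ap) cgs) s (ADia A \<Phi>) \<longleftrightarrow>
    (if undefined \<in> A then \<exists>\<pi>\<in>Pth n s. satp (M n :: ('ag,'ap) cgs) \<pi> \<Phi> else \<forall>\<pi>\<in>Pth n s. satp (M n :: ('ag,'ap) cgs) \<pi> \<Phi>)"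
proof (cases "undefined \<in> A")
  case True
  show ?thesis
  proof
    assume "sat (M n :: ('ag,'ap) cgs) s (ADia A \<Phi>)"
    then obtain F where F: "strats (M n :: ('ag,'ap) cgs) A F" "\<forall>\<pi>\<in>out (M n :: ('ag,'ap) cgs) s A F. satp (M n :: ('ag,'ap) cgs) \<pi> \<Phi>"
      unfolding sat.simps by blast
    obtain \<pi> where "\<pi> \<in> out (M n :: ('ag,'ap) cgs) s A F" using out_nonempty[OF is_cgs_M F(1)] by blast
    then show "if undefined \<in> A then \<exists>\<pi>\<in>Pth n s. satp (M n :: ('ag,'ap) cgs) \<pi> \<Phi> else \<forall>\<pi>\<in>Pth n s. satp (M n :: ('ag,'ap) cgs) \<pi> \<Phi>"
      using True F(2) out_sub[of n s A F] by auto
  next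
    assume "if undefined \<in> A then \<exists>\<pi>\<in>Pth n s. satp (M n :: ('ag,'ap) cgs) \<pi> \<Phi> else \<forall>\<pi>\<in>Pth n s. satp (M n :: ('ag,'ap) cgs) \<pi> \<Phi>"
    then obtain \<pi> where p: "\<pi> \<in> Pth n s" "satp (M n :: ('ag,'ap) cgs) \<pi> \<Phi>" using True by auto
    show "sat (M n :: ('ag,'ap) cgs) s (ADia A \<Phi>)"
      using out_single[OF p(1) s] True p(2) by auto
  qed
next
  case False
  have o: "\<And>F. out (M n :: ('ag,'ap) cgs) s A F = Pth n s" by (rule out_eq[OF s False])
  have st: "strats (M n :: ('ag,'ap) cgs) A (\<lambda>a h. 0)" by (simp add: strats_def)
  show ?thesis using False st by (auto simp: o)
qed

lemma sat_box:
  assumes s: "s \<le> 2*n+1"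
  shows "sat (M n :: ('ag,'ap) cgs) s (ABox A \<Phi>) \<longleftrightarrow>
    (if undefined \<in> A then \<forall>\<pi>\<in>Pth n s. satp (M n :: ('ag,'ap) cgs) \<pi> \<Phi> else \<exists>\<pi>\<in>Pth n s. satp (M n :: ('ag,'ap) cgs) \<pi> \<Phi>)"
proof (cases "undefined \<in> A")
  case True
  show ?thesis
  proof
    assume H: "sat (M n :: ('ag,'ap) cgs) s (ABox A \<Phi>)"
    show "if undefined \<in> A then \<forall>\<pi>\<in>Pth n s. satp (M n :: ('ag,'ap) cgs) \<pi> \<Phi> else \<exists>\<pi>\<in>Pth n s. satp (M n :: ('ag,'ap) cgs) \<pi> \<Phi>"
    proof (simp only: True if_True, intro ballI)
      fix \<pi> assume p: "\<pi> \<in> Pth n s"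
      from H out_single(1)[OF p s, of A] obtain \<pi>' where
        "\<pi>' \<in> out (M n :: ('ag,'ap) cgs) s A (\<lambda>a h. \<pi> (length h))" "satp (M n :: ('ag,'ap) cgs) \<pi>' \<Phi>" by auto
      then show "satp (M n :: ('ag,'ap) cgs) \<pi> \<Phi>" using out_single(2)[OF p s True] by blast
    qed
  next
    assume H: "if undefined \<in> A then \<forall>\<pi>\<in>Pth n s. satp (M n :: ('ag,'ap) cgs) \<pi> \<Phi> else \<exists>\<pi>\<in>Pth n s. satp (M n :: ('ag,'ap) cgs) \<pi> \<Phi>"
    show "sat (M n :: ('ag,'ap) cgs) s (ABox A \<Phi>)"
    proof (simp only: sat.simps, intro allI impI)
      fix F assume F: "strats (M n :: ('ag,'ap) cgs) A F"
      obtain \<pi> where o: "\<pi> \<in> out (M n :: ('ag,'ap) cgs) s A F" using out_nonempty[OF is_cgs_M F] by blast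
      then have "\<pi> \<in> Pth n s" using out_sub[of n s A F] by blast
      then show "\<exists>\<pi>\<in>out (M n :: ('ag,'ap) cgs) s A F. satp (M n :: ('ag,'ap) cgs) \<pi> \<Phi>" using H True o by auto
    qed
  qed
next
  case False
  have o: "\<And>F. out (M n :: ('ag,'ap) cgs) s A F = Pth n s" by (rule out_eq[OF s False])
  have st: "strats (M n :: ('ag,'ap) cgs) A (\<lambda>a h. 0)" by (simp add: strats_def)
  show ?thesis using False st by (auto simp: o)
qed



definition ext :: "nat \<Rightarrow> nat \<Rightarrow> nat" where
  "ext t k = (if k = 0 then t else if even t then Suc t else t)"

lemma ext_path: "ext t \<in> Pth n t"
  unfolding Pth_def ext_def by (auto simp: Rr_def)

definition pcons :: "nat \<Rightarrow> (nat \<Rightarrow> nat) \<Rightarrow> nat \<Rightarrow> nat" where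
  "pcons s \<pi> k = (case k of 0 \<Rightarrow> s | Suc j \<Rightarrow> \<pi> j)"

lemma pcons_path: "Rr n s t \<Longrightarrow> \<pi> \<in> Pth n t \<Longrightarrow> pcons s \<pi> \<in> Pth n s"
  unfolding Pth_def pcons_def
  by (auto split: nat.splits)

lemma EX_char: "(\<exists>\<pi>\<in>Pth n s. T (\<pi> (Suc 0))) \<longleftrightarrow> (\<exists>t. Rr n s t \<and> T t)"
proof
  assume "\<exists>\<pi>\<in>Pth n s. T (\<pi> (Suc 0))"
  then obtain \<pi> where "\<pi> \<in> Pth n s" "T (\<pi> (Suc 0))" by blast
  then show "\<exists>t. Rr n s t \<and> T t" unfolding Pth_def by (metis (mono_tags, lifting) mem_Collect_eq)
next
  assume "\<exists>t. Rr n s t \<and> T t"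
  then obtain t where t: "Rr n s t" "T t" by blast
  have "pcons s (ext t) \<in> Pth n s" by (rule pcons_path[OF t(1) ext_path])
  moreover have "pcons s (ext t) (Suc 0) = t" by (simp add: pcons_def ext_def)
  ultimately show "\<exists>\<pi>\<in>Pth n s. T (\<pi> (Suc 0))" using t(2) by metis
qed

lemma path_reach: "\<pi> \<in> Pth n s \<Longrightarrow> (Rr n)\<^sup>*\<^sup>* s (\<pi> i)"
proof (induct i)
  case 0 then show ?case by (simp add: Pth_def)
next
  case (Suc i) then show ?case
    by (metis (mono_tags, lifting) Pth_def mem_Collect_eq rtranclp.rtrancl_into_rtrancl)
qed

lemma reach_path: "(Rr n)\<^sup>*\<^sup>* s t \<Longrightarrow> \<exists>\<pi>\<in>Pth n s. \<exists>i. \<pi> i = t"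
proof (induct rule: converse_rtranclp_induct)
  case base
  have "ext t 0 = t" by (simp add: ext_def)
  then show ?case using ext_path by blast
next
  case (step s u)
  then obtain \<pi> i where "\<pi> \<in> Pth n u" "\<pi> i = t" by blast
  moreover have "pcons s \<pi> (Suc i) = \<pi> i" by (simp add: pcons_def)
  ultimately show ?case using pcons_path[OF step(1)] by metis
qed

lemma EF_char: "(\<exists>\<pi>\<in>Pth n s. \<exists>i. T (\<pi> i)) \<longleftrightarrow> (\<exists>t. (Rr n)\<^sup>*\<^sup>* s t \<and> T t)"
  using path_reach reach_path by metis

lemma EG_char: "(\<exists>\<pi>\<in>Pth n s. \<forall>i. T (\<pi> i)) \<longleftrightarrow> T s \<and> T (if even s then Suc s else s)"
proof
  assume "\<exists>\<pi>\<in>Pth n s. \<forall>i. T (\<pi> i)"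
  then obtain \<pi> where p: "\<pi> \<in> Pth n s" "\<forall>i. T (\<pi> i)" by blast
  have p0: "\<pi> 0 = s" using p(1) by (simp add: Pth_def)
  have "Rr n (\<pi> 0) (\<pi> (Suc 0))" using p(1) unfolding Pth_def by blast
  then have r: "Rr n s (\<pi> (Suc 0))" using p0 by simp
  have "T s" using p(2) p0 by metis
  moreover have "T (\<pi> (Suc 0))" using p(2) by blast
  ultimately show "T s \<and> T (if even s then Suc s else s)" using r Rr_even by auto
next
  assume "T s \<and> T (if even s then Suc s else s)"
  then have "\<forall>i. T (ext s i)" by (auto simp: ext_def split: if_splits)
  then show "\<exists>\<pi>\<in>Pth n s. \<forall>i. T (\<pi> i)" using ext_path by blast
qed

lemma reach_step: "Rr n s t \<Longrightarrow> (Rr n)\<^sup>*\<^sup>* s t" by blast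

lemma reachA: assumes "1 \<le> j" "j \<le> i" shows "(Rr n)\<^sup>*\<^sup>* (2*i+1) (2*j+1)"
  using assms(2)
proof (induct i rule: dec_induct)
  case base then show ?case by simp
next
  case (step i)
  have "Rr n (2*Suc i+1) (2*i)" using step(1) assms(1) by (simp add: Rr_odd)
  moreover have "Rr n (2*i) (2*i+1)" by (simp add: Rr_even)
  ultimately show ?case using step(3) by (meson rtranclp.rtrancl_into_rtrancl converse_rtranclp_into_rtranclp)
qed

lemma reachB: assumes "1 \<le> j" "j < i" shows "(Rr n)\<^sup>*\<^sup>* (2*i+1) (2*j)"
proof -
  have "(Rr n)\<^sup>*\<^sup>* (2*i+1) (2*Suc j+1)" using assms by (intro reachA) auto
  moreover have "Rr n (2*Suc j+1) (2*j)" using assms by (simp add: Rr_odd)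
  ultimately show ?thesis by (meson rtranclp.rtrancl_into_rtrancl)
qed

lemma reachC: assumes "1 \<le> j" "j \<le> i" shows "(Rr n)\<^sup>*\<^sup>* (2*i) (2*j+1)"
proof -
  have "Rr n (2*i) (2*i+1)" by (simp add: Rr_even)
  then show ?thesis using reachA[OF assms] by (meson converse_rtranclp_into_rtranclp)
qed

lemma reachD: assumes "1 \<le> j" "j \<le> i" shows "(Rr n)\<^sup>*\<^sup>* (2*i) (2*j)"
proof (cases "j = i")
  case True then show ?thesis by simp
next
  case False
  have "Rr n (2*i) (2*i+1)" by (simp add: Rr_even)
  then show ?thesis using reachB[of j i n] assms False by (meson converse_rtranclp_into_rtranclp le_neq_implies_less)
qed

lemma reach_top1: assumes "1 \<le> n" "t \<le> 2*n+1" shows "(Rr n)\<^sup>*\<^sup>* 1 t"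
proof -
  have r2n: "Rr n 1 (2*n)" by (simp add: Rr_odd)
  consider "t = 0" | "t = 1" | j where "t = 2*j" "1 \<le> j" "j \<le> n" | j where "t = 2*j+1" "1 \<le> j" "j \<le> n"
  proof -
    define j where "j = t div 2"
    have tj: "t = 2*j \<or> t = 2*j+1" unfolding j_def by presburger
    have jn: "j \<le> n" using tj assms(2) by linarith
    show ?thesis
    proof (cases "j = 0")
      case True then show ?thesis using tj that(1,2) by auto
    next
      case False then show ?thesis using tj jn that(3,4) by auto
    qed
  qed
  then show ?thesis
  proof cases
    case 1 then show ?thesis by (simp add: Rr_odd reach_step)
  next
    case 2 then show ?thesis by simp
  next
    case 3 then show ?thesis using reachD[of j n n] r2n by (meson converse_rtranclp_into_rtranclp)
  next
    case 4 then show ?thesis using reachC[of j n n] r2n by (meson converse_rtranclp_into_rtranclp)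
  qed
qed

lemma reach_top0: assumes "1 \<le> n" "t \<le> 2*n+1" shows "(Rr n)\<^sup>*\<^sup>* 0 t"
proof -
  have "Rr n 0 1" by (simp add: Rr_even)
  then show ?thesis using reach_top1[OF assms] by (meson converse_rtranclp_into_rtranclp)
qed

lemma reach_bound: "(Rr n)\<^sup>*\<^sup>* s t \<Longrightarrow> s \<le> 2*n+1 \<Longrightarrow> t \<le> 2*n+1"
  by (induct rule: rtranclp_induct) (auto intro: Rr_bound')



definition Q :: "nat \<Rightarrow> nat \<Rightarrow> (nat \<Rightarrow> bool) \<Rightarrow> bool" where
  "Q N n T \<longleftrightarrow> (\<forall>i. N \<le> i \<longrightarrow> i \<le> n \<longrightarrow> T (2*i) = T 0 \<and> T (2*i+1) = T 1)"

lemma decomp: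
  fixes t n :: nat
  assumes "t \<le> 2*n+1"
  obtains "t = 0" | "t = 1" | j where "t = 2*j" "1 \<le> j" "j \<le> n" | j where "t = 2*j+1" "1 \<le> j" "j \<le> n"
proof -
  define j where "j = t div 2"
  have tj: "t = 2*j \<or> t = 2*j+1" unfolding j_def by presburger
  have jn: "j \<le> n" using tj assms by linarith
  show ?thesis
  proof (cases "j = 0")
    case True then show ?thesis using tj that(1,2) by auto
  next
    case False then show ?thesis using tj jn that(3,4) by auto
  qed
qed

lemma Q_neg: "Q N n T \<Longrightarrow> Q N n (\<lambda>s. \<not> T s)"
  by (simp add: Q_def)

lemma Q_bin: "Q N n T1 \<Longrightarrow> Q N n T2 \<Longrightarrow> Q N n (\<lambda>s. f (T1 s) (T2 s))"
  by (simp add: Q_def)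

lemma Q_mono: "Q N n T \<Longrightarrow> N \<le> N' \<Longrightarrow> Q N' n T"
  by (simp add: Q_def)

lemma Q_cong: "Q N n T \<Longrightarrow> (\<And>s. s \<le> 2*n+1 \<Longrightarrow> T s = T' s) \<Longrightarrow> Q N n T'"
  unfolding Q_def by (metis le_SucI mult_le_mono2 Suc_eq_plus1 Suc_le_mono le0 le_add2 Suc_1 add_le_mono1 mult_2 nat_le_linear)

lemma Q_EG: "Q N n T \<Longrightarrow> Q N n (\<lambda>s. T s \<and> T (if even s then Suc s else s))"
  by (simp add: Q_def)

lemma Q_EX:
  assumes q: "Q N n T" and N: "1 \<le> N"
  shows "Q (Suc N) n (\<lambda>s. \<exists>t. Rr n s t \<and> T t)"
  unfolding Q_def
proof (intro allI impI)
  fix i assume i: "Suc N \<le> i" "i \<le> n"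
  have qi: "T (2*i) = T 0" "T (2*i+1) = T 1" using q i unfolding Q_def by auto
  have qi1: "T (2*(i-1)) = T 0" using q i unfolding Q_def by auto
  have qn: "T (2*n) = T 0" using q i unfolding Q_def by auto
  have e0: "(\<exists>t. Rr n 0 t \<and> T t) \<longleftrightarrow> T 1" by (simp add: Rr_even)
  have e2: "(\<exists>t. Rr n (2*i) t \<and> T t) \<longleftrightarrow> T (2*i+1)" by (simp add: Rr_even)
  have o1: "(\<exists>t. Rr n 1 t \<and> T t) \<longleftrightarrow> T 1 \<or> T 0 \<or> T (2*n)" by (auto simp: Rr_odd)
  have a: "2*i+1-3 = 2*(i-1)" "5 \<le> 2*i+1" "2*i+1 \<noteq> 1" using i N by auto
  have o2: "(\<exists>t. Rr n (2*i+1) t \<and> T t) \<longleftrightarrow> T (2*i+1) \<or> T (2*(i-1))"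
    using a by (auto simp: Rr_odd)
  show "(\<exists>t. Rr n (2*i) t \<and> T t) = (\<exists>t. Rr n 0 t \<and> T t) \<and>
        (\<exists>t. Rr n (2*i+1) t \<and> T t) = (\<exists>t. Rr n 1 t \<and> T t)"
    using e0 e2 o1 o2 qi qi1 qn by auto
qed

lemma Q_EF:
  assumes q: "Q N n T" and N: "1 \<le> N"
  shows "Q (Suc N) n (\<lambda>s. \<exists>t. (Rr n)\<^sup>*\<^sup>* s t \<and> T t)"
  unfolding Q_def
proof (intro allI impI conjI)
  fix i assume i: "Suc N \<le> i" "i \<le> n"
  have n1: "1 \<le> n" using i N by auto
  have qj: "\<And>j. N \<le> j \<Longrightarrow> j \<le> n \<Longrightarrow> T (2*j) = T 0 \<and> T (2*j+1) = T 1" using q unfolding Q_def by blast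
  have b2i: "2*i \<le> 2*n+1" "2*i+1 \<le> 2*n+1" using i by auto
  have s2i: "Rr n (2*i) (2*i+1)" by (simp add: Rr_even)
  show "(\<exists>t. (Rr n)\<^sup>*\<^sup>* (2*i) t \<and> T t) = (\<exists>t. (Rr n)\<^sup>*\<^sup>* 0 t \<and> T t)"
  proof
    assume "\<exists>t. (Rr n)\<^sup>*\<^sup>* (2*i) t \<and> T t"
    then obtain t where "(Rr n)\<^sup>*\<^sup>* (2*i) t" "T t" by blast
    then show "\<exists>t. (Rr n)\<^sup>*\<^sup>* 0 t \<and> T t" using reach_bound b2i reach_top0[OF n1] by blast
  next
    assume "\<exists>t. (Rr n)\<^sup>*\<^sup>* 0 t \<and> T t"
    then obtain t where t: "(Rr n)\<^sup>*\<^sup>* 0 t" "T t" by blast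
    have tb: "t \<le> 2*n+1" using reach_bound[OF t(1)] by simp
    show "\<exists>t. (Rr n)\<^sup>*\<^sup>* (2*i) t \<and> T t"
    proof (cases rule: decomp[OF tb])
      case 1 then show ?thesis using t(2) qj[of i] i by (intro exI[of _ "2*i"]) auto
    next
      case 2 then show ?thesis using t(2) qj[of i] i s2i by (intro exI[of _ "2*i+1"]) auto
    next
      case (3 j)
      show ?thesis
      proof (cases "j \<le> i")
        case True then show ?thesis using 3 t(2) reachD[of j i n] by blast
      next
        case False then show ?thesis using 3 t(2) qj[of i] qj[of j] i by (intro exI[of _ "2*i"]) auto
      qed
    next
      case (4 j)
      show ?thesis
      proof (cases "j \<le> i")
        case True then show ?thesis using 4 t(2) reachC[of j i n] by blast
      next
        case False then show ?thesis using 4 t(2) qj[of i] qj[of j] i s2i by (intro exI[of _ "2*i+1"]) auto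
      qed
    qed
  qed
  show "(\<exists>t. (Rr n)\<^sup>*\<^sup>* (2*i+1) t \<and> T t) = (\<exists>t. (Rr n)\<^sup>*\<^sup>* 1 t \<and> T t)"
  proof
    assume "\<exists>t. (Rr n)\<^sup>*\<^sup>* (2*i+1) t \<and> T t"
    then obtain t where "(Rr n)\<^sup>*\<^sup>* (2*i+1) t" "T t" by blast
    then show "\<exists>t. (Rr n)\<^sup>*\<^sup>* 1 t \<and> T t" using reach_bound b2i reach_top1[OF n1] by blast
  next
    assume "\<exists>t. (Rr n)\<^sup>*\<^sup>* 1 t \<and> T t"
    then obtain t where t: "(Rr n)\<^sup>*\<^sup>* 1 t" "T t" by blast
    have tb: "t \<le> 2*n+1" using reach_bound[OF t(1)] by simp
    have rB: "(Rr n)\<^sup>*\<^sup>* (2*i+1) (2*(i-1))" using i N by (intro reachB) auto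
    have qi1: "T (2*(i-1)) = T 0" using qj[of "i-1"] i by auto
    show "\<exists>t. (Rr n)\<^sup>*\<^sup>* (2*i+1) t \<and> T t"
    proof (cases rule: decomp[OF tb])
      case 1 then show ?thesis using t(2) qi1 rB by auto
    next
      case 2 then show ?thesis using t(2) qj[of i] i by (intro exI[of _ "2*i+1"]) auto
    next
      case (3 j)
      show ?thesis
      proof (cases "j < i")
        case True then show ?thesis using 3 t(2) reachB[of j i n] by blast
      next
        case False then show ?thesis using 3 t(2) qj[of j] i qi1 rB by auto
      qed
    next
      case (4 j)
      show ?thesis
      proof (cases "j \<le> i")
        case True then show ?thesis using 4 t(2) reachA[of j i n] by blast
      next
        case False then show ?thesis using 4 t(2) qj[of i] qj[of j] i by (intro exI[of _ "2*i+1"]) auto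
      qed
    qed
  qed
qed



lemma Q_cong_all: "Q N n T \<Longrightarrow> (\<And>s. T s = T' s) \<Longrightarrow> Q N n T'"
  by (simp add: Q_def)

lemma inv:
  "(\<exists>N\<ge>1. \<forall>n. Q N n (\<lambda>s. sat (M n :: ('ag,'ap) cgs) s \<chi>)) \<and>
   (\<exists>N\<ge>1. \<forall>n. Q N n (\<lambda>s. \<exists>\<pi>\<in>Pth n s. satp (M n :: ('ag,'ap) cgs) \<pi> \<Phi>) \<and>
               Q N n (\<lambda>s. \<forall>\<pi>\<in>Pth n s. satp (M n :: ('ag,'ap) cgs) \<pi> \<Phi>))"
proof (induct rule: asf_apf.induct)
  case (AProp p)
  have "Q 1 n (\<lambda>s. sat (M n :: ('ag,'ap) cgs) s (AProp p))" for n by (simp add: Q_def)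
  then show ?case by blast
next
  case (ANeg x)
  then obtain N where N: "N \<ge> 1" "\<forall>n. Q N n (\<lambda>s. sat (M n :: ('ag,'ap) cgs) s x)" by blast
  have "Q N n (\<lambda>s. sat (M n :: ('ag,'ap) cgs) s (ANeg x))" for n
    using Q_neg[of N n "\<lambda>s. sat (M n :: ('ag,'ap) cgs) s x"] N(2) by simp
  then show ?case using N(1) by blast
next
  case (AOr x1 x2)
  then obtain N1 N2 where N: "N1 \<ge> 1" "\<forall>n. Q N1 n (\<lambda>s. sat (M n :: ('ag,'ap) cgs) s x1)"
    "\<forall>n. Q N2 n (\<lambda>s. sat (M n :: ('ag,'ap) cgs) s x2)" by blast
  have "Q (max N1 N2) n (\<lambda>s. sat (M n :: ('ag,'ap) cgs) s (AOr x1 x2))" for n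
  proof -
    have q1: "Q (max N1 N2) n (\<lambda>s. sat (M n :: ('ag,'ap) cgs) s x1)" using N(2) Q_mono max.cobounded1 by blast
    have q2: "Q (max N1 N2) n (\<lambda>s. sat (M n :: ('ag,'ap) cgs) s x2)" using N(3) Q_mono max.cobounded2 by blast
    have "Q (max N1 N2) n (\<lambda>s. (\<lambda>a b. a \<or> b) (sat (M n :: ('ag,'ap) cgs) s x1) (sat (M n :: ('ag,'ap) cgs) s x2))"
      by (rule Q_bin[OF q1 q2])
    then show ?thesis by simp
  qed
  moreover have "max N1 N2 \<ge> 1" using N(1) by simp
  ultimately show ?case by blast
next
  case (AAnd x1 x2)
  then obtain N1 N2 where N: "N1 \<ge> 1" "\<forall>n. Q N1 n (\<lambda>s. sat (M n :: ('ag,'ap) cgs) s x1)"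
    "\<forall>n. Q N2 n (\<lambda>s. sat (M n :: ('ag,'ap) cgs) s x2)" by blast
  have "Q (max N1 N2) n (\<lambda>s. sat (M n :: ('ag,'ap) cgs) s (AAnd x1 x2))" for n
  proof -
    have q1: "Q (max N1 N2) n (\<lambda>s. sat (M n :: ('ag,'ap) cgs) s x1)" using N(2) Q_mono max.cobounded1 by blast
    have q2: "Q (max N1 N2) n (\<lambda>s. sat (M n :: ('ag,'ap) cgs) s x2)" using N(3) Q_mono max.cobounded2 by blast
    have "Q (max N1 N2) n (\<lambda>s. (\<lambda>a b. a \<and> b) (sat (M n :: ('ag,'ap) cgs) s x1) (sat (M n :: ('ag,'ap) cgs) s x2))"
      by (rule Q_bin[OF q1 q2])
    then show ?thesis by simp
  qed
  moreover have "max N1 N2 \<ge> 1" using N(1) by simp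
  ultimately show ?case by blast
next
  case (AImp x1 x2)
  then obtain N1 N2 where N: "N1 \<ge> 1" "\<forall>n. Q N1 n (\<lambda>s. sat (M n :: ('ag,'ap) cgs) s x1)"
    "\<forall>n. Q N2 n (\<lambda>s. sat (M n :: ('ag,'ap) cgs) s x2)" by blast
  have "Q (max N1 N2) n (\<lambda>s. sat (M n :: ('ag,'ap) cgs) s (AImp x1 x2))" for n
  proof -
    have q1: "Q (max N1 N2) n (\<lambda>s. sat (M n :: ('ag,'ap) cgs) s x1)" using N(2) Q_mono max.cobounded1 by blast
    have q2: "Q (max N1 N2) n (\<lambda>s. sat (M n :: ('ag,'ap) cgs) s x2)" using N(3) Q_mono max.cobounded2 by blast
    have "Q (max N1 N2) n (\<lambda>s. (\<lambda>a b. a \<longrightarrow> b) (sat (M n :: ('ag,'ap) cgs) s x1) (sat (M n :: ('ag,'ap) cgs) s x2))"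
      by (rule Q_bin[OF q1 q2])
    then show ?thesis by simp
  qed
  moreover have "max N1 N2 \<ge> 1" using N(1) by simp
  ultimately show ?case by blast
next
  case (ADia A \<Phi>)
  then obtain N where N: "N \<ge> 1" "\<forall>n. Q N n (\<lambda>s. \<exists>\<pi>\<in>Pth n s. satp (M n :: ('ag,'ap) cgs) \<pi> \<Phi>) \<and>
               Q N n (\<lambda>s. \<forall>\<pi>\<in>Pth n s. satp (M n :: ('ag,'ap) cgs) \<pi> \<Phi>)" by blast
  have "Q N n (\<lambda>s. sat (M n :: ('ag,'ap) cgs) s (ADia A \<Phi>))" for n
  proof (cases "(undefined::'ag) \<in> A")
    case True
    have E: "Q N n (\<lambda>s. \<exists>\<pi>\<in>Pth n s. satp (M n :: ('ag,'ap) cgs) \<pi> \<Phi>)" using N(2) by blast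
    show ?thesis
    proof (rule Q_cong[OF E])
      fix s :: nat assume "s \<le> 2*n+1"
      then show "(\<exists>\<pi>\<in>Pth n s. satp (M n :: ('ag,'ap) cgs) \<pi> \<Phi>) = sat (M n :: ('ag,'ap) cgs) s (ADia A \<Phi>)"
        using sat_dia[of s n A \<Phi>] True by simp
    qed
  next
    case False
    have E: "Q N n (\<lambda>s. \<forall>\<pi>\<in>Pth n s. satp (M n :: ('ag,'ap) cgs) \<pi> \<Phi>)" using N(2) by blast
    show ?thesis
    proof (rule Q_cong[OF E])
      fix s :: nat assume "s \<le> 2*n+1"
      then show "(\<forall>\<pi>\<in>Pth n s. satp (M n :: ('ag,'ap) cgs) \<pi> \<Phi>) = sat (M n :: ('ag,'ap) cgs) s (ADia A \<Phi>)"
        using sat_dia[of s n A \<Phi>] False by simp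
    qed
  qed
  then show ?case using N(1) by blast
next
  case (ABox A \<Phi>)
  then obtain N where N: "N \<ge> 1" "\<forall>n. Q N n (\<lambda>s. \<exists>\<pi>\<in>Pth n s. satp (M n :: ('ag,'ap) cgs) \<pi> \<Phi>) \<and>
               Q N n (\<lambda>s. \<forall>\<pi>\<in>Pth n s. satp (M n :: ('ag,'ap) cgs) \<pi> \<Phi>)" by blast
  have "Q N n (\<lambda>s. sat (M n :: ('ag,'ap) cgs) s (ABox A \<Phi>))" for n
  proof (cases "(undefined::'ag) \<in> A")
    case True
    have E: "Q N n (\<lambda>s. \<forall>\<pi>\<in>Pth n s. satp (M n :: ('ag,'ap) cgs) \<pi> \<Phi>)" using N(2) by blast
    show ?thesis
    proof (rule Q_cong[OF E])
      fix s :: nat assume "s \<le> 2*n+1"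
      then show "(\<forall>\<pi>\<in>Pth n s. satp (M n :: ('ag,'ap) cgs) \<pi> \<Phi>) = sat (M n :: ('ag,'ap) cgs) s (ABox A \<Phi>)"
        using sat_box[of s n A \<Phi>] True by simp
    qed
  next
    case False
    have E: "Q N n (\<lambda>s. \<exists>\<pi>\<in>Pth n s. satp (M n :: ('ag,'ap) cgs) \<pi> \<Phi>)" using N(2) by blast
    show ?thesis
    proof (rule Q_cong[OF E])
      fix s :: nat assume "s \<le> 2*n+1"
      then show "(\<exists>\<pi>\<in>Pth n s. satp (M n :: ('ag,'ap) cgs) \<pi> \<Phi>) = sat (M n :: ('ag,'ap) cgs) s (ABox A \<Phi>)"
        using sat_box[of s n A \<Phi>] False by simp
    qed
  qed
  then show ?case using N(1) by blast
next
  case (ANext x)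
  then obtain N where N: "N \<ge> 1" "\<forall>n. Q N n (\<lambda>s. sat (M n :: ('ag,'ap) cgs) s x)" by blast
  have "Q (Suc N) n (\<lambda>s. \<exists>\<pi>\<in>Pth n s. satp (M n :: ('ag,'ap) cgs) \<pi> (ANext x)) \<and>
        Q (Suc N) n (\<lambda>s. \<forall>\<pi>\<in>Pth n s. satp (M n :: ('ag,'ap) cgs) \<pi> (ANext x))" for n
  proof
    have qT: "Q N n (\<lambda>s. sat (M n :: ('ag,'ap) cgs) s x)" using N(2) by blast
    have qTn: "Q N n (\<lambda>s. \<not> sat (M n :: ('ag,'ap) cgs) s x)" by (rule Q_neg[OF qT])
    have qE: "Q (Suc N) n (\<lambda>s. \<exists>t. Rr n s t \<and> sat (M n :: ('ag,'ap) cgs) t x)" by (rule Q_EX[OF qT N(1)])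
    show "Q (Suc N) n (\<lambda>s. \<exists>\<pi>\<in>Pth n s. satp (M n :: ('ag,'ap) cgs) \<pi> (ANext x))"
    proof (rule Q_cong_all[OF qE])
      fix s show "(\<exists>t. Rr n s t \<and> sat (M n :: ('ag,'ap) cgs) t x) = (\<exists>\<pi>\<in>Pth n s. satp (M n :: ('ag,'ap) cgs) \<pi> (ANext x))"
        unfolding satp.simps using EX_char[of n s "(\<lambda>t. sat (M n :: ('ag,'ap) cgs) t x)"] by simp
    qed
    have qA: "Q (Suc N) n (\<lambda>s. \<not> (\<exists>t. Rr n s t \<and> \<not> sat (M n :: ('ag,'ap) cgs) t x))" by (rule Q_neg[OF Q_EX[OF qTn N(1)]])
    show "Q (Suc N) n (\<lambda>s. \<forall>\<pi>\<in>Pth n s. satp (M n :: ('ag,'ap) cgs) \<pi> (ANext x))"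
    proof (rule Q_cong_all[OF qA])
      fix s show "(\<not> (\<exists>t. Rr n s t \<and> \<not> sat (M n :: ('ag,'ap) cgs) t x)) = (\<forall>\<pi>\<in>Pth n s. satp (M n :: ('ag,'ap) cgs) \<pi> (ANext x))"
        unfolding satp.simps One_nat_def by (subst EX_char[of n s "(\<lambda>t. \<not> sat (M n :: ('ag,'ap) cgs) t x)", symmetric]) auto
    qed
  qed
  then show ?case using N(1) by (intro exI[of _ "Suc N"]) auto
next
  case (AEv x)
  then obtain N where N: "N \<ge> 1" "\<forall>n. Q N n (\<lambda>s. sat (M n :: ('ag,'ap) cgs) s x)" by blast
  have "Q (Suc N) n (\<lambda>s. \<exists>\<pi>\<in>Pth n s. satp (M n :: ('ag,'ap) cgs) \<pi> (AEv x)) \<and>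
        Q (Suc N) n (\<lambda>s. \<forall>\<pi>\<in>Pth n s. satp (M n :: ('ag,'ap) cgs) \<pi> (AEv x))" for n
  proof
    have qT: "Q N n (\<lambda>s. sat (M n :: ('ag,'ap) cgs) s x)" using N(2) by blast
    have qTn: "Q N n (\<lambda>s. \<not> sat (M n :: ('ag,'ap) cgs) s x)" by (rule Q_neg[OF qT])
    have qE: "Q (Suc N) n (\<lambda>s. \<exists>t. (Rr n)\<^sup>*\<^sup>* s t \<and> sat (M n :: ('ag,'ap) cgs) t x)" by (rule Q_EF[OF qT N(1)])
    show "Q (Suc N) n (\<lambda>s. \<exists>\<pi>\<in>Pth n s. satp (M n :: ('ag,'ap) cgs) \<pi> (AEv x))"
    proof (rule Q_cong_all[OF qE])
      fix s show "(\<exists>t. (Rr n)\<^sup>*\<^sup>* s t \<and> sat (M n :: ('ag,'ap) cgs) t x) = (\<exists>\<pi>\<in>Pth n s. satp (M n :: ('ag,'ap) cgs) \<pi> (AEv x))"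
        unfolding satp.simps using EF_char[of n s "(\<lambda>t. sat (M n :: ('ag,'ap) cgs) t x)"] by simp
    qed
    have qA: "Q (Suc N) n (\<lambda>s. \<not> (\<not> sat (M n :: ('ag,'ap) cgs) s x \<and> \<not> sat (M n :: ('ag,'ap) cgs) (if even s then Suc s else s) x))" by (rule Q_mono[OF Q_neg[OF Q_EG[OF qTn]]], simp)
    show "Q (Suc N) n (\<lambda>s. \<forall>\<pi>\<in>Pth n s. satp (M n :: ('ag,'ap) cgs) \<pi> (AEv x))"
    proof (rule Q_cong_all[OF qA])
      fix s show "(\<not> (\<not> sat (M n :: ('ag,'ap) cgs) s x \<and> \<not> sat (M n :: ('ag,'ap) cgs) (if even s then Suc s else s) x)) = (\<forall>\<pi>\<in>Pth n s. satp (M n :: ('ag,'ap) cgs) \<pi> (AEv x))"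
        unfolding satp.simps by (subst EG_char[of n s "(\<lambda>t. \<not> sat (M n :: ('ag,'ap) cgs) t x)", symmetric]) auto
    qed
  qed
  then show ?case using N(1) by (intro exI[of _ "Suc N"]) auto
next
  case (AAlw x)
  then obtain N where N: "N \<ge> 1" "\<forall>n. Q N n (\<lambda>s. sat (M n :: ('ag,'ap) cgs) s x)" by blast
  have "Q (Suc N) n (\<lambda>s. \<exists>\<pi>\<in>Pth n s. satp (M n :: ('ag,'ap) cgs) \<pi> (AAlw x)) \<and>
        Q (Suc N) n (\<lambda>s. \<forall>\<pi>\<in>Pth n s. satp (M n :: ('ag,'ap) cgs) \<pi> (AAlw x))" for n
  proof
    have qT: "Q N n (\<lambda>s. sat (M n :: ('ag,'ap) cgs) s x)" using N(2) by blast
    have qTn: "Q N n (\<lambda>s. \<not> sat (M n :: ('ag,'ap) cgs) s x)" by (rule Q_neg[OF qT])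
    have qE: "Q (Suc N) n (\<lambda>s. sat (M n :: ('ag,'ap) cgs) s x \<and> sat (M n :: ('ag,'ap) cgs) (if even s then Suc s else s) x)" by (rule Q_mono[OF Q_EG[OF qT]], simp)
    show "Q (Suc N) n (\<lambda>s. \<exists>\<pi>\<in>Pth n s. satp (M n :: ('ag,'ap) cgs) \<pi> (AAlw x))"
    proof (rule Q_cong_all[OF qE])
      fix s show "(sat (M n :: ('ag,'ap) cgs) s x \<and> sat (M n :: ('ag,'ap) cgs) (if even s then Suc s else s) x) = (\<exists>\<pi>\<in>Pth n s. satp (M n :: ('ag,'ap) cgs) \<pi> (AAlw x))"
        unfolding satp.simps using EG_char[of n s "(\<lambda>t. sat (M n :: ('ag,'ap) cgs) t x)"] by simp
    qed
    have qA: "Q (Suc N) n (\<lambda>s. \<not> (\<exists>t. (Rr n)\<^sup>*\<^sup>* s t \<and> \<not> sat (M n :: ('ag,'ap) cgs) t x))" by (rule Q_neg[OF Q_EF[OF qTn N(1)]])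
    show "Q (Suc N) n (\<lambda>s. \<forall>\<pi>\<in>Pth n s. satp (M n :: ('ag,'ap) cgs) \<pi> (AAlw x))"
    proof (rule Q_cong_all[OF qA])
      fix s show "(\<not> (\<exists>t. (Rr n)\<^sup>*\<^sup>* s t \<and> \<not> sat (M n :: ('ag,'ap) cgs) t x)) = (\<forall>\<pi>\<in>Pth n s. satp (M n :: ('ag,'ap) cgs) \<pi> (AAlw x))"
        unfolding satp.simps by (subst EF_char[of n s "(\<lambda>t. \<not> sat (M n :: ('ag,'ap) cgs) t x)", symmetric]) auto
    qed
  qed
  then show ?case using N(1) by (intro exI[of _ "Suc N"]) auto
qed



lemma ge2: assumes "\<pi> \<in> Pth n s" "2 \<le> s" shows "2 \<le> \<pi> k"
proof (induct k)
  case 0 then show ?case using assms by (simp add: Pth_def)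
next
  case (Suc k)
  have "Rr n (\<pi> k) (\<pi> (Suc k))" using assms(1) by (simp add: Pth_def)
  then show ?case using Suc unfolding Rr_def by auto
qed

definition mu :: "nat \<Rightarrow> nat" where "mu s = (if even s then Suc s else s)"

lemma mu_le: "Rr n s t \<Longrightarrow> 2 \<le> s \<Longrightarrow> mu t \<le> mu s"
  unfolding Rr_def mu_def by (auto elim!: oddE)

lemma mu_lt: "Rr n s t \<Longrightarrow> 2 \<le> s \<Longrightarrow> odd s \<Longrightarrow> even t \<Longrightarrow> mu t < mu s"
  unfolding Rr_def mu_def by (auto elim!: oddE)

lemma ev_odd:
  assumes p: "\<pi> \<in> Pth n s" and s: "2 \<le> s"
  shows "\<exists>i. \<forall>j\<ge>i. odd (\<pi> j)"
proof -
  define f where "f k = mu (\<pi> k)" for k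
  have R: "Rr n (\<pi> k) (\<pi> (Suc k))" for k using p by (simp add: Pth_def)
  have g2: "2 \<le> \<pi> k" for k by (rule ge2[OF p s])
  have dec: "f (Suc k) \<le> f k" for k unfolding f_def using mu_le[OF R g2] .
  obtain i where i: "\<forall>j. f i \<le> f j" using ex_has_least_nat[of "\<lambda>_. True" 0 f] by blast
  have "\<forall>j\<ge>Suc i. odd (\<pi> j)"
  proof (intro allI impI)
    fix j assume j: "Suc i \<le> j"
    then obtain j' where j': "j = Suc j'" "i \<le> j'" by (metis Suc_le_D Suc_le_mono)
    show "odd (\<pi> j)"
    proof (rule ccontr)
      assume ev: "\<not> odd (\<pi> j)"
      have "odd (\<pi> j')"
      proof (rule ccontr)
        assume "\<not> odd (\<pi> j')"
        then have "\<pi> j = Suc (\<pi> j')" using R[of j'] j'(1) by (simp add: Rr_even)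
        then show False using ev \<open>\<not> odd (\<pi> j')\<close> by simp
      qed
      then have "f j < f j'" unfolding f_def using mu_lt[OF R[of j'] g2] ev j'(1) by simp
      moreover have "f j' \<le> f i" using lift_Suc_antimono_le[of f, OF dec j'(2)] .
      ultimately show False using i by (metis leD le_less_trans)
    qed
  qed
  then show ?thesis by blast
qed

lemma bitP: "1 \<le> k \<Longrightarrow> k \<le> 4 \<Longrightarrow> bit4 (if P then B1111 else B0000) k = P"
  by (auto simp: bit4_def)

lemma VP_eq:
  "VP (M n :: ('ag,'ap) cgs) \<pi> (RAlw (RProp undefined)) = from_bits (\<lambda>k.
      if k = 1 then (\<forall>i. even (\<pi> i))
      else if k = 2 then (\<exists>i. \<forall>j\<ge>i. even (\<pi> j))
      else if k = 3 then (\<forall>i. \<exists>j\<ge>i. even (\<pi> j))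
      else (\<exists>i. even (\<pi> i)))"
proof -
  have V: "V (M n :: ('ag,'ap) cgs) s (RProp undefined) = (if even s then B1111 else B0000)" for s
    by simp
  have b: "bit4 (if P then B1111 else B0000) k = (if P then bit4 B1111 k else bit4 B0000 k)" for P k
    by simp
  show ?thesis
    unfolding VP.simps
  proof (rule arg_cong[where f=from_bits], rule ext)
    fix k :: nat
    show "(if k = 1 then \<forall>i. bit4 (V (M n :: ('ag,'ap) cgs) (\<pi> i) (RProp undefined)) 1
         else if k = 2 then \<exists>i. \<forall>j\<ge>i. bit4 (V (M n :: ('ag,'ap) cgs) (\<pi> j) (RProp undefined)) 2
         else if k = 3 then \<forall>i. \<exists>j\<ge>i. bit4 (V (M n :: ('ag,'ap) cgs) (\<pi> j) (RProp undefined)) 3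
         else \<exists>i. bit4 (V (M n :: ('ag,'ap) cgs) (\<pi> i) (RProp undefined)) 4) =
        (if k = 1 then \<forall>i. even (\<pi> i) else if k = 2 then \<exists>i. \<forall>j\<ge>i. even (\<pi> j)
         else if k = 3 then \<forall>i. \<exists>j\<ge>i. even (\<pi> j) else \<exists>i. even (\<pi> i))"
      by (simp only: V b) (auto simp: bit4_def)
  qed
qed

lemma ge0011: "B0011 \<le> from_bits f \<longleftrightarrow> f 1 \<or> f 2 \<or> f 3"
  by (auto simp: from_bits_def less_eq_b4_def)

definition psi :: "('ag,'ap) rsf" where "psi = RBox {} (RAlw (RProp undefined))"

lemma V_psi:
  assumes "s \<le> 2*n+1"
  shows "V (M n :: ('ag,'ap) cgs) s psi =
     Greatest (\<lambda>b. \<exists>\<pi>\<in>Pth n s. b \<le> VP (M n :: ('ag,'ap) cgs) \<pi> (RAlw (RProp undefined)))"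
proof -
  have "(\<lambda>b. \<forall>F. strats (M n :: ('ag,'ap) cgs) {} F \<longrightarrow>
        (\<exists>\<pi>\<in>out (M n :: ('ag,'ap) cgs) s {} F. b \<le> VP (M n :: ('ag,'ap) cgs) \<pi> (RAlw (RProp undefined)))) =
      (\<lambda>b. \<exists>\<pi>\<in>Pth n s. b \<le> VP (M n :: ('ag,'ap) cgs) \<pi> (RAlw (RProp undefined)))"
  proof -
    have o: "out (M n :: ('ag,'ap) cgs) s {} F = Pth n s" for F by (rule out_eq[OF assms]) simp
    show ?thesis by (simp only: o strats_def ball_simps simp_thms)
  qed
  then show ?thesis unfolding psi_def by (simp only: V.simps(7))
qed

lemma at0: assumes "1 \<le> n" shows "B0011 \<le> V (M n :: ('ag,'ap) cgs) 0 psi"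
proof -
  define \<pi> where "\<pi> k = k mod 2" for k :: nat
  have p: "\<pi> \<in> Pth n 0" unfolding Pth_def \<pi>_def
  proof (intro CollectI conjI allI)
    fix k
    show "Rr n (k mod 2) (Suc k mod 2)"
      by (cases "even k") (auto simp: Rr_def mod_Suc elim!: evenE oddE)
  qed simp
  have "\<forall>i. \<exists>j\<ge>i. even (\<pi> j)"
  proof
    fix i show "\<exists>j\<ge>i. even (\<pi> j)" by (rule exI[of _ "2*i"]) (simp add: \<pi>_def)
  qed
  then have "B0011 \<le> VP (M n :: ('ag,'ap) cgs) \<pi> (RAlw (RProp undefined))"
    unfolding VP_eq ge0011 by simp
  define Pp where "Pp = (\<lambda>b. \<exists>\<pi>\<in>Pth n 0. b \<le> VP (M n :: ('ag,'ap) cgs) \<pi> (RAlw (RProp undefined)))"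
  then have P: "Pp B0011" using p \<open>B0011 \<le> VP (M n :: ('ag,'ap) cgs) \<pi> (RAlw (RProp undefined))\<close> by blast
  have "V (M n :: ('ag,'ap) cgs) 0 psi = Greatest Pp"
    unfolding Pp_def by (rule V_psi) simp
  then show ?thesis using Greatest_b4(2)[of Pp B0011 B0011, OF P P] by simp
qed

lemma at2n: assumes "1 \<le> n" shows "\<not> B0011 \<le> V (M n :: ('ag,'ap) cgs) (2*n) psi"
proof
  let ?P = "\<lambda>b. \<exists>\<pi>\<in>Pth n (2*n). b \<le> VP (M n :: ('ag,'ap) cgs) \<pi> (RAlw (RProp undefined))"
  assume H: "B0011 \<le> V (M n :: ('ag,'ap) cgs) (2*n) psi"
  have P0: "?P B0000" using ext_path b4_bot by blast
  have "V (M n :: ('ag,'ap) cgs) (2*n) psi = Greatest ?P" by (rule V_psi) simp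
  then obtain \<pi> where p: "\<pi> \<in> Pth n (2*n)" and le: "B0011 \<le> VP (M n :: ('ag,'ap) cgs) \<pi> (RAlw (RProp undefined))"
    using Greatest_b4(1)[of ?P, OF P0] H order_trans by metis
  obtain i where i: "\<forall>j\<ge>i. odd (\<pi> j)" using ev_odd[OF p] assms by auto
  from le have "(\<forall>i. even (\<pi> i)) \<or> (\<exists>i. \<forall>j\<ge>i. even (\<pi> j)) \<or> (\<forall>i. \<exists>j\<ge>i. even (\<pi> j))"
    unfolding VP_eq ge0011 by simp
  then show False using i by (metis le_cases nat_le_linear order_refl)
qed

theorem part2:
  "\<exists>(\<psi> :: ('ag, 'ap) rsf) (u :: b4). \<not> (\<exists>\<chi> :: ('ag, 'ap) asf.
            \<forall>(S :: ('ag, 'ap) cgs) s. is_cgs S \<longrightarrow> s \<in> St S \<longrightarrow>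
              (sat S s \<chi> \<longleftrightarrow> u \<le> V S s \<psi>))"
proof (intro exI[of _ psi] exI[of _ B0011] notI)
  assume "\<exists>\<chi> :: ('ag, 'ap) asf. \<forall>(S :: ('ag, 'ap) cgs) s. is_cgs S \<longrightarrow> s \<in> St S \<longrightarrow>
              (sat S s \<chi> \<longleftrightarrow> B0011 \<le> V S s psi)"
  then obtain \<chi> :: "('ag, 'ap) asf" where H: "\<forall>(S :: ('ag, 'ap) cgs) s. is_cgs S \<longrightarrow> s \<in> St S \<longrightarrow>
              (sat S s \<chi> \<longleftrightarrow> B0011 \<le> V S s psi)" by blast
  obtain N where N: "N \<ge> 1" "\<forall>n. Q N n (\<lambda>s. sat (M n :: ('ag,'ap) cgs) s \<chi>)"
    using conjunct1[OF inv[of \<chi>]] by blast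
  have "sat (M N :: ('ag,'ap) cgs) (2*N) \<chi> = sat (M N :: ('ag,'ap) cgs) 0 \<chi>"
    using N(2) unfolding Q_def by blast
  moreover have "sat (M N :: ('ag,'ap) cgs) 0 \<chi>"
  proof -
    have "is_cgs (M N :: ('ag,'ap) cgs) \<longrightarrow> 0 \<in> St (M N :: ('ag,'ap) cgs) \<longrightarrow>
        (sat (M N :: ('ag,'ap) cgs) 0 \<chi> \<longleftrightarrow> B0011 \<le> V (M N :: ('ag,'ap) cgs) 0 psi)" using H by blast
    then show ?thesis using is_cgs_M[where 'a='ag and 'b='ap] at0[OF N(1)] by simp
  qed
  moreover have "\<not> sat (M N :: ('ag,'ap) cgs) (2*N) \<chi>"
  proof -
    have "is_cgs (M N :: ('ag,'ap) cgs) \<longrightarrow> 2*N \<in> St (M N :: ('ag,'ap) cgs) \<longrightarrow>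
        (sat (M N :: ('ag,'ap) cgs) (2*N) \<chi> \<longleftrightarrow> B0011 \<le> V (M N :: ('ag,'ap) cgs) (2*N) psi)" using H by blast
    then show ?thesis using is_cgs_M[where 'a='ag and 'b='ap] at2n[OF N(1)] by simp
  qed
  ultimately show False by simp
qed


theorem theorem3:
  shows "(\<forall>\<phi> :: ('ag, 'ap::finite) asf. \<exists>\<phi>' :: ('ag, 'ap) rsf.
            \<forall>(S :: ('ag, 'ap) cgs) s. is_cgs S \<longrightarrow> s \<in> St S \<longrightarrow>
              (V S s \<phi>' = B1111 \<longleftrightarrow> sat S s \<phi>))
       \<and> (\<exists>(\<psi> :: ('ag, 'ap) rsf) (u :: b4). \<not> (\<exists>\<chi> :: ('ag, 'ap) asf.
            \<forall>(S :: ('ag, 'ap) cgs) s. is_cgs S \<longrightarrow> s \<in> St S \<longrightarrow>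
              (sat S s \<chi> \<longleftrightarrow> u \<le> V S s \<psi>)))"
  by (rule conjI[OF part1 part2])

end
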